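(* Let $k\ge1$, let $\Gamma\subset\mathbb{R}_+^k$ be a nonempty compact set, and let $(b_n)_{n\ge1}$ be a sequence of functions in $\mathcal{B}_\Gamma$. Then there exists a subsequence $(b_{n'})$ that converges pointwise on $\mathbb{R}^k$ to a limit function $b$, i.e., $\lim_{n'\to\infty}b_{n'}(x)=b(x)$ for every $x\in\mathbb{R}^k$, and this function $b$ belongs to $\mathcal{B}_\Gamma$.
   Context: $\mathcal{B}_\Gamma$ denotes the set of all convex functions $b:\mathbb{R}^k\to\mathbb{R}$ with $b(\mathbf{0})=0$ such that for every $x\in\mathbb{R}^k$ the subdifferential $\partial b(x)=\{g\in\mathbb{R}^k: b(y)-b(x)\ge g\cdot(y-x)\ \forall y\in\mathbb{R}^k\}$ satisfies $\partial b(x)\cap\Gamma\neq\emptyset$. *)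

theory Defs
  imports "HOL-Analysis.Analysis"
begin

definition subdiff :: "(real ^ 'k \<Rightarrow> real) \<Rightarrow> real ^ 'k \<Rightarrow> (real ^ 'k) set" where
  "subdiff b x = {g. \<forall>y. b y - b x \<ge> g \<bullet> (y - x)}"

definition B_Gamma :: "(real ^ 'k) set \<Rightarrow> (real ^ 'k \<Rightarrow> real) set" where
  "B_Gamma \<Gamma> = {b. convex_on UNIV b \<and> b 0 = 0 \<and> (\<forall>x. subdiff b x \<inter> \<Gamma> \<noteq> {})}"

definition nonneg_orthant :: "(real ^ 'k) set" where
  "nonneg_orthant = {x. \<forall>i. 0 \<le> x $ i}"

end

theory Submission
  imports Defs "HOL-Complex_Analysis.Great_Picard"
begin

lemma B_lip:
  fixes b :: "real ^ 'k \<Rightarrow> real"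
  assumes "b \<in> B_Gamma \<Gamma>" "\<forall>g\<in>\<Gamma>. norm g \<le> M"
  shows "b x - b y \<le> M * norm (x - y)"
proof -
  from assms(1) obtain g where g: "g \<in> subdiff b x" "g \<in> \<Gamma>"
    unfolding B_Gamma_def by blast
  have "b y - b x \<ge> g \<bullet> (y - x)" using g(1) unfolding subdiff_def by blast
  moreover have "g \<bullet> (y - x) \<ge> - (norm g * norm (y - x))"
    using Cauchy_Schwarz_ineq2[of g "y - x"] by linarith
  moreover have "norm g * norm (y - x) \<le> M * norm (x - y)"
    using assms(2) g(2) by (simp add: mult_right_mono norm_minus_commute)
  ultimately show ?thesis by linarith
qed

lemma B_lip_abs:
  fixes b :: "real ^ 'k \<Rightarrow> real"
  assumes "b \<in> B_Gamma \<Gamma>" "\<forall>g\<in>\<Gamma>. norm g \<le> M"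
  shows "\<bar>b x - b y\<bar> \<le> M * norm (x - y)"
  using B_lip[OF assms, of x y] B_lip[OF assms, of y x]
  by (simp add: norm_minus_commute)

theorem proposition3:
  fixes \<Gamma> :: "(real ^ 'k) set" and bs :: "nat \<Rightarrow> real ^ 'k \<Rightarrow> real"
  assumes "\<Gamma> \<subseteq> nonneg_orthant" and "\<Gamma> \<noteq> {}" and "compact \<Gamma>"
    and "\<And>n. bs n \<in> B_Gamma \<Gamma>"
  shows "\<exists>r b. strict_mono r \<and> (\<forall>x. (\<lambda>n. bs (r n) x) \<longlonglongrightarrow> b x) \<and> b \<in> B_Gamma \<Gamma>"
proof -
  obtain M where M: "M > 0" "\<forall>g\<in>\<Gamma>. norm g \<le> M"
    using compact_imp_bounded[OF assms(3)] bounded_pos by blast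
  have lip: "\<bar>bs n x - bs n y\<bar> \<le> M * norm (x - y)" for n x y
    using B_lip_abs[OF assms(4) M(2)] .
  have z: "bs n 0 = 0" for n using assms(4)[of n] unfolding B_Gamma_def by blast
  have bnd: "\<bar>bs n x\<bar> \<le> M * norm x" for n x using lip[of n x 0] z[of n] by simp
  obtain R :: "(real ^ 'k) set" where R: "countable R" "UNIV \<subseteq> closure R"
  proof -
    obtain T :: "(real ^ 'k) set" where "countable T" "T \<subseteq> UNIV" "UNIV \<subseteq> closure T"
      by (rule separable[of "UNIV :: (real ^ 'k) set"])
    show ?thesis using \<open>countable T\<close> \<open>UNIV \<subseteq> closure T\<close> by (rule that)
  qed
  define f where "f n x = bs n x / (1 + norm x)" for n x
  have fb: "norm (f n x) \<le> M" for n x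
  proof -
    have p: "1 + norm x > 0" by (simp add: add_pos_nonneg)
    have "M * norm x \<le> M * (1 + norm x)" using M(1) by simp
    then have "\<bar>bs n x\<bar> \<le> M * (1 + norm x)" using bnd[of n x] by linarith
    then show ?thesis unfolding f_def using p
      by (simp add: abs_divide pos_divide_le_eq)
  qed
  obtain k where k: "strict_mono k" and kc: "\<And>x. x \<in> R \<Longrightarrow> \<exists>l. (\<lambda>n. f (k n) x) \<longlonglongrightarrow> l"
    using function_convergent_subsequence[OF R(1), of f M] fb by blast
  have convR: "convergent (\<lambda>n. bs (k n) d)" if dR: "d \<in> R" for d
  proof -
    obtain l where l: "(\<lambda>n. f (k n) d) \<longlonglongrightarrow> l" using kc[OF dR] by blast
    have "(\<lambda>n. (1 + norm d) * f (k n) d) \<longlonglongrightarrow> (1 + norm d) * l"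
      by (intro tendsto_mult tendsto_const l)
    moreover have "(\<lambda>n. (1 + norm d) * f (k n) d) = (\<lambda>n. bs (k n) d)"
    proof -
      have "1 + norm d \<noteq> 0" using norm_ge_zero[of d] by linarith
      then show ?thesis unfolding f_def by simp
    qed
    ultimately show ?thesis unfolding convergent_def by auto
  qed
  have conv: "convergent (\<lambda>n. bs (k n) x)" for x
  proof -
    have "Cauchy (\<lambda>n. bs (k n) x)"
    proof (rule metric_CauchyI)
      fix e :: real assume e: "e > 0"
      have "x \<in> closure R" using R(2) by blast
      then obtain d where d: "d \<in> R" "dist d x < e / (3 * M)"
        using closure_approachable[of x R] e M(1) by (meson divide_pos_pos mult_pos_pos zero_less_numeral)
      have "Cauchy (\<lambda>n. bs (k n) d)" using convR[OF d(1)] Cauchy_convergent_iff by blast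
      then obtain N where N: "\<forall>m\<ge>N. \<forall>n\<ge>N. dist (bs (k m) d) (bs (k n) d) < e / 3"
        using e unfolding Cauchy_def by (meson divide_pos_pos zero_less_numeral)
      have "M * norm (x - d) < e / 3"
        using d(2) M(1) by (simp add: dist_norm norm_minus_commute field_simps)
      have "dist (bs (k m) x) (bs (k n) x) < e" if mn: "m \<ge> N" "n \<ge> N" for m n
      proof -
        have 1: "\<bar>bs (k m) x - bs (k m) d\<bar> < e / 3" using lip[of "k m" x d] \<open>M * norm (x - d) < e / 3\<close> by linarith
        have 2: "\<bar>bs (k n) x - bs (k n) d\<bar> < e / 3" using lip[of "k n" x d] \<open>M * norm (x - d) < e / 3\<close> by linarith
        have 3: "\<bar>bs (k m) d - bs (k n) d\<bar> < e / 3" using N mn unfolding dist_real_def by blast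
        show ?thesis using 1 2 3 unfolding dist_real_def by linarith
      qed
      then have "\<forall>m\<ge>N. \<forall>n\<ge>N. dist (bs (k m) x) (bs (k n) x) < e" by blast
      then show "\<exists>N. \<forall>m\<ge>N. \<forall>n\<ge>N. dist (bs (k m) x) (bs (k n) x) < e" by blast
    qed
    then show ?thesis using Cauchy_convergent_iff by blast
  qed
  define b where "b x = lim (\<lambda>n. bs (k n) x)" for x
  have lim: "(\<lambda>n. bs (k n) x) \<longlonglongrightarrow> b x" for x
    unfolding b_def using conv convergent_LIMSEQ_iff by blast
  have b0: "b 0 = 0"
  proof -
    have "(\<lambda>n. bs (k n) 0) \<longlonglongrightarrow> 0" using z by simp
    then show ?thesis using lim[of 0] LIMSEQ_unique by blast
  qed
  have cvx: "convex_on UNIV b"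
  proof (rule convex_onI)
    fix t :: real and x y assume t: "t > 0" "t < 1"
    have A: "(\<lambda>n. bs (k n) ((1 - t) *\<^sub>R x + t *\<^sub>R y)) \<longlonglongrightarrow> b ((1 - t) *\<^sub>R x + t *\<^sub>R y)"
      by (rule lim)
    have B: "(\<lambda>n. (1 - t) * bs (k n) x + t * bs (k n) y) \<longlonglongrightarrow> (1 - t) * b x + t * b y"
      by (intro tendsto_intros lim)
    have C: "bs (k n) ((1 - t) *\<^sub>R x + t *\<^sub>R y) \<le> (1 - t) * bs (k n) x + t * bs (k n) y" for n
      using assms(4)[of "k n"] t unfolding B_Gamma_def
      by (intro convex_onD) auto
    show "b ((1 - t) *\<^sub>R x + t *\<^sub>R y) \<le> (1 - t) * b x + t * b y"
      by (rule LIMSEQ_le[OF A B]) (use C in auto)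
  qed simp
  have sub: "subdiff b x \<inter> \<Gamma> \<noteq> {}" for x
  proof -
    have "\<exists>g. g \<in> subdiff (bs (k n)) x \<inter> \<Gamma>" for n
      using assms(4)[of "k n"] unfolding B_Gamma_def by blast
    then obtain G where G: "\<And>n. G n \<in> subdiff (bs (k n)) x \<inter> \<Gamma>"
      by metis
    have "seq_compact \<Gamma>" using assms(3) compact_imp_seq_compact by blast
    then obtain g s where g: "g \<in> \<Gamma>" "strict_mono s" "(G \<circ> s) \<longlonglongrightarrow> g"
      using G unfolding seq_compact_def by blast
    have "b y - b x \<ge> g \<bullet> (y - x)" for y
    proof -
      have A: "(\<lambda>n. bs (k (s n)) y - bs (k (s n)) x) \<longlonglongrightarrow> b y - b x"
        using LIMSEQ_subseq_LIMSEQ[OF lim g(2)] unfolding o_def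
        by (intro tendsto_diff) auto
      have B: "(\<lambda>n. G (s n) \<bullet> (y - x)) \<longlonglongrightarrow> g \<bullet> (y - x)"
        using g(3) unfolding o_def by (intro tendsto_intros) auto
      have C: "G (s n) \<bullet> (y - x) \<le> bs (k (s n)) y - bs (k (s n)) x" for n
        using G[of "s n"] unfolding subdiff_def by blast
      show ?thesis by (rule LIMSEQ_le[OF B A]) (use C in auto)
    qed
    then have "g \<in> subdiff b x" unfolding subdiff_def by blast
    then show ?thesis using g(1) by blast
  qed
  show ?thesis
    using k lim b0 cvx sub unfolding B_Gamma_def by blast
qed

end
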